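(* There is an absolute constant $C$ (independent of $n$) such that for every $n\ge1$ and every $\varphi\in\mathrm{BMO}(\mathbb{R}^n)$, $$\|\varphi\|_H\le C\sqrt n\,\|\varphi\|_*.$$
   Context: For a ball $B\subset\mathbb{R}^n$, $\langle\varphi\rangle_B=\frac1{|B|}\int_B\varphi$, and $\|\varphi\|_*=\sup_{B}(\langle\varphi^2\rangle_B-\langle\varphi\rangle_B^2)^{1/2}$ over all balls; $\mathrm{BMO}(\mathbb{R}^n)$ is the set of locally integrable real $\varphi$ with $\|\varphi\|_*<\infty$. $H_t(y)=(4\pi t)^{-n/2}e^{-|y|^2/(4t)}$; for $z=(y,t)\in\mathbb{R}^n\times(0,\infty)$, $g(z)=(H_t*g)(y)$, and $\|\varphi\|_H=\sup_{z}(\varphi^2(z)-\varphi(z)^2)^{1/2}$. *)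

theory Defs
  imports "HOL-Analysis.Analysis"
begin

text \<open>R^n is modelled as functions nat => real, extensional on {..<n}, carrying
  the completed product of Lebesgue-Borel measures (= Lebesgue measure on R^n).\<close>

definition RN :: "nat \<Rightarrow> (nat \<Rightarrow> real) measure" where
  "RN n = completion (Pi\<^sub>M {..<n} (\<lambda>_. lborel))"

definition enorm :: "nat \<Rightarrow> (nat \<Rightarrow> real) \<Rightarrow> real" where
  "enorm n x = sqrt (\<Sum>i<n. (x i)\<^sup>2)"

definition eball :: "nat \<Rightarrow> (nat \<Rightarrow> real) \<Rightarrow> real \<Rightarrow> (nat \<Rightarrow> real) set" where
  "eball n c r = {x \<in> space (RN n). enorm n (\<lambda>i. x i - c i) < r}"

definition is_ball :: "nat \<Rightarrow> (nat \<Rightarrow> real) set \<Rightarrow> bool" where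
  "is_ball n B \<longleftrightarrow> (\<exists>c \<in> space (RN n). \<exists>r > 0. B = eball n c r)"

definition avg :: "nat \<Rightarrow> (nat \<Rightarrow> real) set \<Rightarrow> ((nat \<Rightarrow> real) \<Rightarrow> real) \<Rightarrow> real" where
  "avg n B f = (LINT x:B|RN n. f x) / measure (RN n) B"

definition locally_integrable :: "nat \<Rightarrow> ((nat \<Rightarrow> real) \<Rightarrow> real) \<Rightarrow> bool" where
  "locally_integrable n f \<longleftrightarrow>
     f \<in> borel_measurable (RN n) \<and> (\<forall>B. is_ball n B \<longrightarrow> set_integrable (RN n) B f)"

definition bmo_norm :: "nat \<Rightarrow> ((nat \<Rightarrow> real) \<Rightarrow> real) \<Rightarrow> ereal" where
  "bmo_norm n \<phi> = (SUP B \<in> {B. is_ball n B}.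
      ereal (sqrt (avg n B (\<lambda>x. (\<phi> x)\<^sup>2) - (avg n B \<phi>)\<^sup>2)))"

text \<open>phi in BMO: locally integrable with finite BMO norm (finiteness of the
  defining expression presupposes local square integrability, made explicit).\<close>
definition BMO :: "nat \<Rightarrow> ((nat \<Rightarrow> real) \<Rightarrow> real) set" where
  "BMO n = {\<phi>. locally_integrable n \<phi> \<and> locally_integrable n (\<lambda>x. (\<phi> x)\<^sup>2)
                \<and> bmo_norm n \<phi> < \<infinity>}"

definition heat_kernel :: "nat \<Rightarrow> real \<Rightarrow> (nat \<Rightarrow> real) \<Rightarrow> real" where
  "heat_kernel n t y = (4 * pi * t) powr (- real n / 2) * exp (- (enorm n y)\<^sup>2 / (4 * t))"

definition heat_ext :: "nat \<Rightarrow> ((nat \<Rightarrow> real) \<Rightarrow> real) \<Rightarrow> (nat \<Rightarrow> real) \<Rightarrow> real \<Rightarrow> real" where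
  "heat_ext n g y t = (\<integral>x. heat_kernel n t (\<lambda>i. y i - x i) * g x \<partial>RN n)"

definition H_norm :: "nat \<Rightarrow> ((nat \<Rightarrow> real) \<Rightarrow> real) \<Rightarrow> ereal" where
  "H_norm n \<phi> = (SUP z \<in> space (RN n) \<times> {0<..}.
      ereal (sqrt (heat_ext n (\<lambda>x. (\<phi> x)\<^sup>2) (fst z) (snd z) - (heat_ext n \<phi> (fst z) (snd z))\<^sup>2)))"

end

theory Submission
  imports Defs "HOL-Probability.Distributions" "HOL-Real_Asymp.Real_Asymp"
begin

abbreviation MM :: "nat \<Rightarrow> (nat \<Rightarrow> real) measure" where
  "MM n \<equiv> Pi\<^sub>M {..<n} (\<lambda>_. lborel)"

interpretation lp: product_sigma_finite "\<lambda>_::nat. lborel::real measure"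
  by (rule product_sigma_finite.intro) (rule lborel.sigma_finite_measure_axioms)

lemma sf_MM: "sigma_finite_measure (MM n)"
  by (rule lp.sigma_finite) simp

lemma space_MM: "space (MM n) = PiE {..<n} (\<lambda>_. UNIV)"
  by (simp add: space_PiM)

lemma space_RN: "space (RN n) = space (MM n)"
  by (simp add: RN_def)

lemma sets_RN: "A \<in> sets (MM n) \<Longrightarrow> A \<in> sets (RN n)"
  by (simp add: RN_def)

lemma meas_RN: "f \<in> borel_measurable (MM n) \<Longrightarrow> f \<in> borel_measurable (RN n)"
  unfolding RN_def by (rule measurable_completion)

lemma enorm_cong: "(\<And>i. i < n \<Longrightarrow> f i = g i) \<Longrightarrow> enorm n f = enorm n g"
  unfolding enorm_def by (auto intro!: sum.cong arg_cong[where f=sqrt])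

lemma enorm_nonneg: "0 \<le> enorm n f"
  unfolding enorm_def by (auto intro!: sum_nonneg)

lemma enorm_sq: "(enorm n f)\<^sup>2 = (\<Sum>i<n. (f i)\<^sup>2)"
  unfolding enorm_def by (simp add: sum_nonneg)

lemma enorm_scale: "enorm n (\<lambda>i. r * f i) = \<bar>r\<bar> * enorm n f"
proof -
  have "(\<Sum>i<n. (r * f i)\<^sup>2) = r\<^sup>2 * (\<Sum>i<n. (f i)\<^sup>2)"
    by (simp add: sum_distrib_left power_mult_distrib)
  then show ?thesis unfolding enorm_def by (simp add: real_sqrt_mult)
qed

lemma enorm_sym: "enorm n (\<lambda>i. x i - y i) = enorm n (\<lambda>i. y i - x i)"
  unfolding enorm_def by (simp add: power2_commute)

lemma meas_enorm[measurable]: "(\<lambda>x. enorm n (\<lambda>i. x i - c i)) \<in> borel_measurable (MM n)"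
  unfolding enorm_def
proof -
  have "(\<lambda>x. \<Sum>i<n. (x i - c i)\<^sup>2) \<in> borel_measurable (MM n)"
  proof (rule borel_measurable_sum)
    fix i assume "i \<in> {..<n}"
    then have [measurable]: "(\<lambda>x. x i) \<in> borel_measurable (MM n)"
      using measurable_component_singleton[of i "{..<n}" "\<lambda>_. lborel"] by simp
    show "(\<lambda>x. (x i - c i)\<^sup>2) \<in> borel_measurable (MM n)" by measurable
  qed
  then show "(\<lambda>x. sqrt (\<Sum>i<n. (x i - c i)\<^sup>2)) \<in> borel_measurable (MM n)" by measurable
qed

lemma eball_alt: "eball n c r = {x \<in> space (MM n). enorm n (\<lambda>i. x i - c i) < r}"
  by (simp add: eball_def space_RN)

lemma eball_sets[measurable]: "eball n c r \<in> sets (MM n)"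
  unfolding eball_alt by measurable

lemma eball_mono: "r \<le> R \<Longrightarrow> eball n c r \<subseteq> eball n c R"
  unfolding eball_alt by auto

lemma scale_measure:
  assumes r: "r > 0"
  shows "emeasure (MM n) (eball n c r) = ennreal (r ^ n) * emeasure (MM n) (eball n (\<lambda>_. 0) 1)"
proof -
  define T where "T = (\<lambda>x::nat\<Rightarrow>real. \<lambda>i\<in>{..<n}. c i + r * x i)"
  have Tm: "T \<in> MM n \<rightarrow>\<^sub>M MM n"
    unfolding T_def by measurable
  have D: "density (distr (MM n) (MM n) T) (\<lambda>_. ennreal (r ^ n)) = MM n"
  proof (rule lp.PiM_eqI)
    show "finite {..<n}" by simp
    show "sets (density (distr (MM n) (MM n) T) (\<lambda>_. ennreal (r ^ n))) = sets (MM n)" by simp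
    fix A :: "nat \<Rightarrow> real set" assume A: "\<And>i. i \<in> {..<n} \<Longrightarrow> A i \<in> sets lborel"
    define P where "P i = (\<lambda>x. c i + r * x) -` A i" for i
    have Pm: "P i \<in> sets lborel" if "i < n" for i
      unfolding P_def using A[of i] that by (auto intro!: measurable_sets_borel[where A="A i"])
    have 1: "emeasure lborel (A i) = ennreal r * emeasure lborel (P i)" if "i < n" for i
    proof -
      have "emeasure lborel (A i) = emeasure (density (distr lborel borel (\<lambda>x. c i + r * x)) (\<lambda>_. ennreal \<bar>r\<bar>)) (A i)"
        using lborel_real_affine[of r "c i"] r by simp
      also have "\<dots> = ennreal r * emeasure (distr lborel borel (\<lambda>x. c i + r * x)) (A i)"
        using A[of i] that r by (subst emeasure_density_const) auto
      also have "\<dots> = ennreal r * emeasure lborel (P i)"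
        using A[of i] that by (subst emeasure_distr) (auto simp: P_def)
      finally show ?thesis .
    qed
    have pre: "T -` PiE {..<n} A \<inter> space (MM n) = PiE {..<n} P"
      by (auto simp: T_def P_def space_MM PiE_def Pi_def extensional_def)
    have "emeasure (density (distr (MM n) (MM n) T) (\<lambda>_. ennreal (r ^ n))) (PiE {..<n} A)
        = ennreal (r ^ n) * emeasure (distr (MM n) (MM n) T) (PiE {..<n} A)"
      using A by (subst emeasure_density_const) (auto intro!: sets_PiM_I_finite)
    also have "\<dots> = ennreal (r ^ n) * emeasure (MM n) (PiE {..<n} P)"
      using A Tm by (subst emeasure_distr) (auto intro!: sets_PiM_I_finite simp: pre)
    also have "\<dots> = ennreal (r ^ n) * (\<Prod>i<n. emeasure lborel (P i))"
      using Pm by (subst lp.emeasure_PiM) auto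
    also have "\<dots> = (\<Prod>i<n. ennreal r * emeasure lborel (P i))"
      using r by (simp add: prod.distrib ennreal_power)
    also have "\<dots> = (\<Prod>i<n. emeasure lborel (A i))"
      using 1 by (auto intro!: prod.cong)
    finally show "emeasure (density (distr (MM n) (MM n) T) (\<lambda>_. ennreal (r ^ n))) (PiE {..<n} A)
        = (\<Prod>i\<in>{..<n}. emeasure lborel (A i))" by simp
  qed
  have pre2: "T -` eball n c r \<inter> space (MM n) = eball n (\<lambda>_. 0) 1"
  proof -
    have "enorm n (\<lambda>i. T x i - c i) = r * enorm n x" for x
    proof -
      have "enorm n (\<lambda>i. T x i - c i) = enorm n (\<lambda>i. r * x i)"
        by (rule enorm_cong) (simp add: T_def)
      then show ?thesis using r by (simp add: enorm_scale)
    qed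
    moreover have "T x \<in> space (MM n)" for x by (simp add: T_def space_MM)
    ultimately show ?thesis using r by (auto simp: eball_alt)
  qed
  have "emeasure (MM n) (eball n c r) = emeasure (density (distr (MM n) (MM n) T) (\<lambda>_. ennreal (r ^ n))) (eball n c r)"
    using D by simp
  also have "\<dots> = ennreal (r ^ n) * emeasure (distr (MM n) (MM n) T) (eball n c r)"
    by (subst emeasure_density_const) auto
  also have "\<dots> = ennreal (r ^ n) * emeasure (MM n) (eball n (\<lambda>_. 0) 1)"
    using Tm by (subst emeasure_distr) (auto simp: pre2)
  finally show ?thesis .
qed

lemma unit_ball_fin: "emeasure (MM n) (eball n (\<lambda>_. 0) 1) < \<infinity>"
proof -
  have "eball n (\<lambda>_. 0) 1 \<subseteq> PiE {..<n} (\<lambda>_. {-1..1})"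
  proof
    fix x assume x: "x \<in> eball n (\<lambda>_. 0) 1"
    have "\<bar>x i\<bar> \<le> 1" if i: "i < n" for i
    proof -
      have "(x i)\<^sup>2 \<le> (\<Sum>j<n. (x j)\<^sup>2)"
        using i by (intro member_le_sum) auto
      also have "\<dots> = (enorm n x)\<^sup>2" by (simp add: enorm_sq)
      also have "\<dots> \<le> 1" using x enorm_nonneg[of n x]
        by (auto simp: eball_alt intro!: power_le_one)
      finally show ?thesis using abs_le_square_iff[of "x i" 1] by simp
    qed
    then show "x \<in> PiE {..<n} (\<lambda>_. {-1..1})" using x
      by (auto simp: eball_alt space_MM PiE_def abs_le_iff)
  qed
  then have "emeasure (MM n) (eball n (\<lambda>_. 0) 1) \<le> emeasure (MM n) (PiE {..<n} (\<lambda>_. {-1..1}))"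
    by (intro emeasure_mono) (auto intro!: sets_PiM_I_finite)
  also have "\<dots> = (\<Prod>i<n. emeasure lborel {-1..1::real})"
    by (subst lp.emeasure_PiM) auto
  also have "\<dots> < \<infinity>" by (simp add: prod_constant power_less_top_ennreal)
  finally show ?thesis .
qed

lemma unit_ball_pos:
  assumes n: "n \<ge> 1"
  shows "0 < emeasure (MM n) (eball n (\<lambda>_. 0) 1)"
proof -
  define e where "e = 1 / (2 * real n)"
  have e: "0 < e" using n by (simp add: e_def)
  have "PiE {..<n} (\<lambda>_. {-e..e}) \<subseteq> eball n (\<lambda>_. 0) 1"
  proof
    fix x assume x: "x \<in> PiE {..<n} (\<lambda>_. {-e..e})"
    have "(\<Sum>j<n. (x j)\<^sup>2) \<le> (\<Sum>j<n. e\<^sup>2)"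
    proof (intro sum_mono)
      fix j assume "j \<in> {..<n}"
      then have "x j \<in> {-e..e}" using x by (auto simp: PiE_def Pi_def)
      then have "\<bar>x j\<bar> \<le> \<bar>e\<bar>" using e by auto
      then show "(x j)\<^sup>2 \<le> e\<^sup>2" by (simp add: abs_le_square_iff)
    qed
    also have "\<dots> = real n * e\<^sup>2" by simp
    also have "\<dots> < 1" using n by (simp add: e_def power2_eq_square field_simps)
    finally have "(enorm n x)\<^sup>2 < 1" by (simp add: enorm_sq)
    then have "enorm n x < 1" using enorm_nonneg[of n x]
      by (metis abs_of_nonneg power2_less_imp_less zero_less_one_class.zero_le_one one_power2)
    then show "x \<in> eball n (\<lambda>_. 0) 1" using x
      by (auto simp: eball_alt space_MM PiE_def)
  qed
  then have "emeasure (MM n) (PiE {..<n} (\<lambda>_. {-e..e})) \<le> emeasure (MM n) (eball n (\<lambda>_. 0) 1)"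
    by (intro emeasure_mono) auto
  moreover have "emeasure (MM n) (PiE {..<n} (\<lambda>_. {-e..e})) = (\<Prod>i<n. emeasure lborel {-e..e})"
    by (subst lp.emeasure_PiM) auto
  moreover have "0 < (\<Prod>i<n. emeasure lborel {-e..e})"
    using e by (simp add: prod_constant ennreal_power)
  ultimately show ?thesis by order
qed

lemma hk_powr: 
  assumes t: "t > 0"
  shows "(4 * pi * t) powr (- real n / 2) = (1 / sqrt (4 * pi * t)) ^ n"
proof -
  have p: "0 < 4 * pi * t" using t by simp
  have "(4 * pi * t) powr (- real n / 2) = ((4 * pi * t) powr (1/2)) powr (- real n)"
    using p by (simp add: powr_powr)
  also have "\<dots> = (1 / sqrt (4 * pi * t)) ^ n"
    using p by (simp add: powr_half_sqrt powr_minus powr_realpow power_one_over inverse_eq_divide)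
  finally show ?thesis .
qed

lemma hk_prod:
  assumes t: "t > 0"
  shows "heat_kernel n t (\<lambda>i. y i - x i) = (\<Prod>i<n. normal_density (y i) (sqrt (2 * t)) (x i))"
proof -
  have "(\<Prod>i<n. normal_density (y i) (sqrt (2 * t)) (x i))
      = (\<Prod>i<n. (1 / sqrt (4 * pi * t)) * exp (- (y i - x i)\<^sup>2 / (4 * t)))"
    using t by (intro prod.cong) (auto simp: normal_density_def power2_commute)
  also have "\<dots> = (1 / sqrt (4 * pi * t)) ^ n * exp (\<Sum>i<n. - (y i - x i)\<^sup>2 / (4 * t))"
    by (simp only: prod.distrib prod_constant exp_sum[OF finite_lessThan] card_lessThan)
  also have "(\<Sum>i<n. - (y i - x i)\<^sup>2 / (4 * t)) = - (enorm n (\<lambda>i. y i - x i))\<^sup>2 / (4 * t)"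
    by (simp add: enorm_sq sum_negf sum_divide_distrib)
  finally show ?thesis using hk_powr[OF t] by (simp add: heat_kernel_def)
qed

lemma hk_nonneg: "t > 0 \<Longrightarrow> 0 \<le> heat_kernel n t z"
  by (simp add: heat_kernel_def)

lemma hk_meas[measurable]: "(\<lambda>x. heat_kernel n t (\<lambda>i. y i - x i)) \<in> borel_measurable (MM n)"
proof -
  have "(\<lambda>x. enorm n (\<lambda>i. y i - x i)) \<in> borel_measurable (MM n)"
    using meas_enorm[of n y] by (subst enorm_sym) simp
  then show ?thesis unfolding heat_kernel_def by measurable
qed

lemma hk_total:
  assumes t: "t > 0"
  shows "(\<integral>\<^sup>+x. ennreal (heat_kernel n t (\<lambda>i. y i - x i)) \<partial>MM n) = 1"
proof -
  have "(\<integral>\<^sup>+x. ennreal (heat_kernel n t (\<lambda>i. y i - x i)) \<partial>MM n)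
      = (\<integral>\<^sup>+x. (\<Prod>i<n. ennreal (normal_density (y i) (sqrt (2 * t)) (x i))) \<partial>MM n)"
    using t by (intro nn_integral_cong) (simp add: hk_prod prod_ennreal)
  also have "\<dots> = (\<Prod>i<n. \<integral>\<^sup>+x. ennreal (normal_density (y i) (sqrt (2 * t)) x) \<partial>lborel)"
    by (subst lp.product_nn_integral_prod) auto
  also have "\<dots> = 1"
    using t by (subst nn_integral_eq_integral) auto
  finally show ?thesis .
qed

definition wt :: "nat \<Rightarrow> real \<Rightarrow> real \<Rightarrow> real" where
  "wt n t r = (4 * pi * t) powr (- real n / 2) * (r / (2 * t) * exp (- r\<^sup>2 / (4 * t)))"

lemma wt_nonneg: "t > 0 \<Longrightarrow> r \<ge> 0 \<Longrightarrow> 0 \<le> wt n t r"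
  by (simp add: wt_def)

lemma wt_meas[measurable]: "wt n t \<in> borel_measurable borel"
  unfolding wt_def by measurable

lemma tail1:
  assumes t: "t > 0" and rho: "rho \<ge> 0"
  shows "(\<integral>\<^sup>+r. ennreal (r / (2 * t) * exp (- r\<^sup>2 / (4 * t))) * indicator {rho<..} r \<partial>lborel)
     = ennreal (exp (- rho\<^sup>2 / (4 * t)))"
proof -
  have "(\<integral>\<^sup>+r. ennreal (r / (2 * t) * exp (- r\<^sup>2 / (4 * t))) * indicator {rho<..} r \<partial>lborel)
     = (\<integral>\<^sup>+r. ennreal (r / (2 * t) * exp (- r\<^sup>2 / (4 * t))) * indicator {rho..} r \<partial>lborel)"
    by (intro nn_integral_cong_AE) (use AE_lborel_singleton[of rho] in \<open>auto elim!: eventually_mono split: split_indicator\<close>)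
  also have "\<dots> = ennreal (0 - (- exp (- rho\<^sup>2 / (4 * t))))"
  proof (rule nn_integral_FTC_atLeast)
    show "(\<lambda>r. r / (2 * t) * exp (- r\<^sup>2 / (4 * t))) \<in> borel_measurable borel" by measurable
    fix x :: real assume x: "rho \<le> x"
    show "0 \<le> x / (2 * t) * exp (- x\<^sup>2 / (4 * t))" using x rho t by simp
    show "((\<lambda>r. - exp (- r\<^sup>2 / (4 * t))) has_real_derivative x / (2 * t) * exp (- x\<^sup>2 / (4 * t))) (at x)"
      using t by (auto intro!: derivative_eq_intros simp: field_simps power2_eq_square)
  next
    show "((\<lambda>r. - exp (- r\<^sup>2 / (4 * t))) \<longlongrightarrow> 0) at_top"
      using t by real_asymp
  qed
  finally show ?thesis by simp
qed

lemma ind_ball_meas[measurable]: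
  "(\<lambda>p. indicator (eball n y (snd p)) (fst p) :: ennreal) \<in> borel_measurable (MM n \<Otimes>\<^sub>M lborel)"
proof -
  have "(\<lambda>p. if enorm n (\<lambda>i. fst p i - y i) < snd p then 1 else 0 :: ennreal) \<in> borel_measurable (MM n \<Otimes>\<^sub>M lborel)"
    by measurable
  then show ?thesis
    by (rule measurable_cong[THEN iffD1, rotated])
       (auto simp: eball_alt space_pair_measure split: split_indicator)
qed

lemma mixture_MM:
  assumes t: "t > 0" and G[measurable]: "G \<in> borel_measurable (MM n)"
  shows "(\<integral>\<^sup>+x. ennreal (heat_kernel n t (\<lambda>i. y i - x i)) * G x \<partial>MM n)
       = (\<integral>\<^sup>+r. ennreal (wt n t r) * indicator {0<..} r * (\<integral>\<^sup>+x. indicator (eball n y r) x * G x \<partial>MM n) \<partial>lborel)"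
proof -
  define K where "K = (4 * pi * t) powr (- real n / 2)"
  have K: "0 \<le> K" by (simp add: K_def)
  have pt: "ennreal (heat_kernel n t (\<lambda>i. y i - x i))
      = (\<integral>\<^sup>+r. ennreal (wt n t r) * indicator {0<..} r * indicator (eball n y r) x \<partial>lborel)"
    if x: "x \<in> space (MM n)" for x
  proof -
    define rho where "rho = enorm n (\<lambda>i. x i - y i)"
    have rho: "0 \<le> rho" by (simp add: rho_def enorm_nonneg)
    have "ennreal (heat_kernel n t (\<lambda>i. y i - x i)) = ennreal K * ennreal (exp (- rho\<^sup>2 / (4 * t)))"
      using K by (simp add: heat_kernel_def K_def rho_def enorm_sym[of n x y] ennreal_mult)
    also have "\<dots> = ennreal K * (\<integral>\<^sup>+r. ennreal (r / (2 * t) * exp (- r\<^sup>2 / (4 * t))) * indicator {rho<..} r \<partial>lborel)"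
      using tail1[OF t rho] by simp
    also have "\<dots> = (\<integral>\<^sup>+r. ennreal K * (ennreal (r / (2 * t) * exp (- r\<^sup>2 / (4 * t))) * indicator {rho<..} r) \<partial>lborel)"
      by (rule nn_integral_cmult[symmetric]) measurable
    also have "\<dots> = (\<integral>\<^sup>+r. ennreal (wt n t r) * indicator {0<..} r * indicator (eball n y r) x \<partial>lborel)"
    proof (rule nn_integral_cong)
      fix r :: real
      show "ennreal K * (ennreal (r / (2 * t) * exp (- r\<^sup>2 / (4 * t))) * indicator {rho<..} r)
          = ennreal (wt n t r) * indicator {0<..} r * indicator (eball n y r) x"
      proof (cases "rho < r")
        case True
        then have r: "0 < r" using rho by simp
        have "ennreal K * ennreal (r / (2 * t) * exp (- r\<^sup>2 / (4 * t))) = ennreal (wt n t r)"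
          using K r t by (simp add: ennreal_mult[symmetric] wt_def K_def)
        then show ?thesis using True x r by (simp add: eball_alt rho_def)
      next
        case False
        then show ?thesis using x by (simp add: eball_alt rho_def)
      qed
    qed
    finally show ?thesis .
  qed
  have "(\<integral>\<^sup>+x. ennreal (heat_kernel n t (\<lambda>i. y i - x i)) * G x \<partial>MM n)
      = (\<integral>\<^sup>+x. (\<integral>\<^sup>+r. ennreal (wt n t r) * indicator {0<..} r * indicator (eball n y r) x * G x \<partial>lborel) \<partial>MM n)"
  proof (intro nn_integral_cong)
    fix x assume x: "x \<in> space (MM n)"
    have [measurable]: "(\<lambda>r. indicator (eball n y r) x :: ennreal) \<in> borel_measurable lborel"
      using measurable_compose[OF measurable_Pair1'[OF x] ind_ball_meas[of n y]] by simp
    show "ennreal (heat_kernel n t (\<lambda>i. y i - x i)) * G x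
      = (\<integral>\<^sup>+r. ennreal (wt n t r) * indicator {0<..} r * indicator (eball n y r) x * G x \<partial>lborel)"
      unfolding pt[OF x] by (rule nn_integral_multc[symmetric]) measurable
  qed
  also have "\<dots> = (\<integral>\<^sup>+r. (\<integral>\<^sup>+x. ennreal (wt n t r) * indicator {0<..} r * indicator (eball n y r) x * G x \<partial>MM n) \<partial>lborel)"
  proof (rule pair_sigma_finite.Fubini'[symmetric])
    show "pair_sigma_finite (MM n) lborel"
      by (intro pair_sigma_finite.intro sf_MM lborel.sigma_finite_measure_axioms)
    show "(\<lambda>(x, r). ennreal (wt n t r) * indicator {0<..} r * indicator (eball n y r) x * G x) \<in> borel_measurable (MM n \<Otimes>\<^sub>M lborel)"
      using ind_ball_meas[of n y] by (simp add: case_prod_beta) measurable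
  qed
  also have "\<dots> = (\<integral>\<^sup>+r. ennreal (wt n t r) * indicator {0<..} r * (\<integral>\<^sup>+x. indicator (eball n y r) x * G x \<partial>MM n) \<partial>lborel)"
    by (intro nn_integral_cong) (simp add: nn_integral_cmult[symmetric] mult.assoc)
  finally show ?thesis .
qed

lemma ln_le_aux:
  fixes s :: real
  assumes s: "1 \<le> s"
  shows "2 * ln s \<le> s - 1 / s"
proof -
  let ?g = "\<lambda>x::real. x - 1 / x - 2 * ln x"
  have "?g 1 \<le> ?g s"
  proof (rule DERIV_nonneg_imp_nondecreasing[OF s])
    fix x :: real assume x: "1 \<le> x" "x \<le> s"
    have "(?g has_real_derivative (1 + 1 / x\<^sup>2 - 2 / x)) (at x)"
      using x by (auto intro!: derivative_eq_intros simp: power2_eq_square field_simps)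
    moreover have "0 \<le> 1 + 1 / x\<^sup>2 - 2 / x"
    proof -
      have "1 + 1 / x\<^sup>2 - 2 / x = (1 - 1 / x)\<^sup>2" using x by (simp add: power2_eq_square field_simps)
      then show ?thesis by simp
    qed
    ultimately show "\<exists>y. (?g has_real_derivative y) (at x) \<and> 0 \<le> y" by blast
  qed
  then show ?thesis by simp
qed

lemma ln_sq_bound:
  fixes s :: real
  assumes s: "0 < s"
  shows "(ln s)\<^sup>2 \<le> (s - 1 / s)\<^sup>2 / 4"
proof (cases "1 \<le> s")
  case True
  have "0 \<le> 2 * ln s" using True by simp
  with ln_le_aux[OF True] have "(2 * ln s)\<^sup>2 \<le> (s - 1 / s)\<^sup>2"
    by (intro power_mono) auto
  then show ?thesis by (simp add: power_mult_distrib)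
next
  case False
  then have s1: "1 \<le> 1 / s" using s by simp
  have "0 \<le> 2 * ln (1 / s)" using s1 by simp
  with ln_le_aux[OF s1] have "(2 * ln (1 / s))\<^sup>2 \<le> (1 / s - s)\<^sup>2"
    by (intro power_mono) auto
  moreover have "ln (1 / s) = - ln s" using s by (simp add: ln_div)
  ultimately show ?thesis by (simp add: power_mult_distrib power2_commute)
qed

lemma poly_id2:
  fixes r R t A B u v w :: real
  assumes "A * u = 1" "B * v = 1" "t * w = 1" "A = B + 2"
  shows "(- (r * w / 2)) * (- (R * r^3) * u + 2 * t * A * v * (R * r)) + (- (R * r^2) + 2 * t * A * R)
      = (R * r^4 * w * u / 2 - 2 * (R * r^2) + 2 * t * A * R) - 2 * v * (R * r^2)"
  using assms by algebra

lemma Phi_eq: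
  fixes m :: nat and t r :: real
  assumes t: "t > 0"
  shows "(- (r / (2 * t))) * (- (r ^ (m + 3)) / (real m + 3) + (2 * t * (real m + 3)) / (real m + 1) * r ^ (m + 1)) + (- (r ^ (m + 2)) + (2 * t * (real m + 3)) * r ^ m)
      = (r ^ (m + 4) / (2 * t * (real m + 3)) - 2 * r ^ (m + 2) + (2 * t * (real m + 3)) * r ^ m) - 2 / (real m + 1) * r ^ (m + 2)"
proof -
  have *: "(real m + 3) * (1 / (real m + 3)) = 1" "(real m + 1) * (1 / (real m + 1)) = 1" "t * (1 / t) = 1"
    using t by auto
  have "(- (r * (1/t) / 2)) * (- (r^m * r^3) * (1 / (real m + 3)) + 2 * t * (real m + 3) * (1 / (real m + 1)) * (r^m * r))
      + (- (r^m * r^2) + 2 * t * (real m + 3) * r^m)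
      = (r^m * r^4 * (1/t) * (1 / (real m + 3)) / 2 - 2 * (r^m * r^2) + 2 * t * (real m + 3) * r^m) - 2 * (1 / (real m + 1)) * (r^m * r^2)"
    by (rule poly_id2[OF *]) simp
  then show ?thesis by (simp add: power_add power2_eq_square mult.commute mult.left_commute mult.assoc)
qed

lemma Phi_deriv:
  fixes m :: nat and t a r :: real
  assumes t: "t > 0" and a: "a = 2 * t * (real m + 3)"
  shows "((\<lambda>r. exp (- r\<^sup>2 / (4 * t)) * (- (r ^ (m + 3)) / (real m + 3) + a / (real m + 1) * r ^ (m + 1)))
     has_real_derivative
     (exp (- r\<^sup>2 / (4 * t)) * (r ^ (m + 4) / a - 2 * r ^ (m + 2) + a * r ^ m)
       - 2 / (real m + 1) * (r ^ (m + 2) * exp (- r\<^sup>2 / (4 * t))))) (at r)"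
proof -
  have a0: "a > 0" using a t by simp
  have e: "((\<lambda>r. exp (- r\<^sup>2 / (4 * t))) has_real_derivative (exp (- r\<^sup>2 / (4 * t)) * (- (r / (2 * t))))) (at r)"
    using t by (auto intro!: derivative_eq_intros simp: field_simps power2_eq_square)
  have q: "((\<lambda>r. - (r ^ (m + 3)) / (real m + 3) + a / (real m + 1) * r ^ (m + 1)) has_real_derivative
      (- (r ^ (m + 2)) + a * r ^ m)) (at r)"
  proof -
    have 1: "((\<lambda>r. r ^ (m + 3)) has_real_derivative real (m + 3) * r ^ (m + 2)) (at r)"
      using DERIV_pow[of "m + 3" r] by simp
    have 2: "((\<lambda>r. r ^ (m + 1)) has_real_derivative real (m + 1) * r ^ m) (at r)"
      using DERIV_pow[of "m + 1" r] by simp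
    have 3: "((\<lambda>r. - (r ^ (m + 3)) / (real m + 3) + a / (real m + 1) * r ^ (m + 1)) has_real_derivative
      (- (real (m + 3) * r ^ (m + 2)) / (real m + 3) + a / (real m + 1) * (real (m + 1) * r ^ m))) (at r)"
      by (intro DERIV_add DERIV_cmult DERIV_minus DERIV_cdivide 1 2)
    have "(- (real (m + 3) * r ^ (m + 2)) / (real m + 3) + a / (real m + 1) * (real (m + 1) * r ^ m))
       = (- (r ^ (m + 2)) + a * r ^ m)"
      by (simp add: add.commute)
    with 3 show ?thesis by simp
  qed
  have eq: "(- (r / (2 * t))) * (- (r ^ (m + 3)) / (real m + 3) + a / (real m + 1) * r ^ (m + 1)) + (- (r ^ (m + 2)) + a * r ^ m)
      = (r ^ (m + 4) / a - 2 * r ^ (m + 2) + a * r ^ m) - 2 / (real m + 1) * r ^ (m + 2)"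
    using Phi_eq[OF t, of r m] unfolding a .
  have eq2: "exp (- r\<^sup>2 / (4 * t)) * - (r / (2 * t)) * (- (r ^ (m + 3)) / (real m + 3) + a / (real m + 1) * r ^ (m + 1)) +
      (- (r ^ (m + 2)) + a * r ^ m) * exp (- r\<^sup>2 / (4 * t)) =
      exp (- r\<^sup>2 / (4 * t)) * (r ^ (m + 4) / a - 2 * r ^ (m + 2) + a * r ^ m) - 2 / (real m + 1) * (r ^ (m + 2) * exp (- r\<^sup>2 / (4 * t)))"
  proof -
    have "exp (- r\<^sup>2 / (4 * t)) * ((- (r / (2 * t))) * (- (r ^ (m + 3)) / (real m + 3) + a / (real m + 1) * r ^ (m + 1)) + (- (r ^ (m + 2)) + a * r ^ m))
      = exp (- r\<^sup>2 / (4 * t)) * ((r ^ (m + 4) / a - 2 * r ^ (m + 2) + a * r ^ m) - 2 / (real m + 1) * r ^ (m + 2))"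
      using eq by simp
    then show ?thesis by (simp add: algebra_simps)
  qed
  show ?thesis
    using DERIV_mult[OF e q] unfolding eq2 .
qed

lemma f_nonneg:
  fixes r a :: real
  assumes r: "0 \<le> r" and a: "0 < a"
  shows "0 \<le> exp (- r\<^sup>2 / (4 * t)) * (r ^ (m + 4) / a - 2 * r ^ (m + 2) + a * r ^ m)"
proof -
  have "r ^ (m + 4) / a - 2 * r ^ (m + 2) + a * r ^ m = r ^ m * ((r\<^sup>2 - a)\<^sup>2 / a)"
    using a by (simp add: power_add field_simps power2_eq_square power4_eq_xxxx)
  moreover have "0 \<le> r ^ m * ((r\<^sup>2 - a)\<^sup>2 / a)" using r a by simp
  ultimately show ?thesis by (metis exp_ge_zero mult_nonneg_nonneg)
qed

lemma moment_m:
  fixes m :: nat and t :: real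
  assumes t: "t > 0"
  defines "a \<equiv> 2 * t * (real m + 3)"
  shows "(\<integral>\<^sup>+r. ennreal (r ^ (m + 2) * exp (- r\<^sup>2 / (4 * t))) * indicator {0<..} r * ennreal ((ln (r / sqrt a))\<^sup>2) \<partial>lborel)
     \<le> ennreal (1 / (2 * (real m + 1))) * (\<integral>\<^sup>+r. ennreal (r ^ (m + 2) * exp (- r\<^sup>2 / (4 * t))) * indicator {0<..} r \<partial>lborel)"
proof -
  have a: "0 < a" using t by (simp add: a_def)
  define E where "E r = exp (- r\<^sup>2 / (4 * t))" for r
  define p where "p r = r ^ (m + 2) * E r" for r
  define f where "f r = E r * (r ^ (m + 4) / a - 2 * r ^ (m + 2) + a * r ^ m)" for r
  define Phi where "Phi r = E r * (- (r ^ (m + 3)) / (real m + 3) + a / (real m + 1) * r ^ (m + 1))" for r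
  define c where "c = 2 / (real m + 1)"
  have c: "0 \<le> c" by (simp add: c_def)
  have fnn: "0 \<le> f r" if "0 \<le> r" for r
    using f_nonneg[OF that a] by (simp add: f_def E_def)
  have pnn: "0 \<le> p r" if "0 \<le> r" for r using that by (simp add: p_def E_def)
  have p0: "p 0 = 0" by (simp add: p_def)
  have dPhi: "(Phi has_real_derivative (f r - c * p r)) (at r)" for r
    using Phi_deriv[OF t a_def[THEN meta_eq_to_obj_eq], of r] by (simp add: Phi_def[abs_def] E_def[abs_def] f_def p_def c_def)
  have contp: "continuous_on S p" for S
    unfolding p_def E_def using t by (intro continuous_intros) auto
  have Phi0: "Phi 0 = 0" by (simp add: Phi_def)
  define J where "J = (\<integral>\<^sup>+r. ennreal (p r) * indicator {0<..} r \<partial>lborel)"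
  define b0 where "b0 = sqrt (a * (real m + 3) / (real m + 1))"
  have b0: "0 \<le> b0" using a unfolding b0_def by (intro real_sqrt_ge_zero divide_nonneg_pos mult_nonneg_nonneg) auto
  have fin: "(\<integral>\<^sup>+r. ennreal (indicator {0..b} r * f r) \<partial>lborel) \<le> ennreal c * J" if b: "b0 \<le> b" for b
  proof -
    have b': "0 \<le> b" using b b0 by simp
    have ip: "(p has_integral integral {0..b} p) {0..b}"
      using integrable_continuous_interval[OF contp] by (simp add: integrable_integral)
    have "((\<lambda>r. f r - c * p r) has_integral (Phi b - Phi 0)) {0..b}"
      using b' dPhi by (intro fundamental_theorem_of_calculus)
        (auto simp: has_real_derivative_iff_has_vector_derivative[symmetric] intro: has_field_derivative_at_within)
    from has_integral_add[OF this has_integral_mult_right[OF ip, of c]]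
    have iF: "(f has_integral (c * integral {0..b} p + Phi b)) {0..b}"
      using Phi0 by (simp add: algebra_simps)
    have Ipos: "0 \<le> integral {0..b} p"
      using pnn by (intro integral_nonneg integrable_continuous_interval[OF contp]) auto
    have Phib: "Phi b \<le> 0"
    proof -
      have X: "0 \<le> a * (real m + 3) / (real m + 1)" using a by (intro divide_nonneg_pos mult_nonneg_nonneg) auto
      have "sqrt (a * (real m + 3) / (real m + 1)) \<le> b" using b by (simp add: b0_def)
      then have "(sqrt (a * (real m + 3) / (real m + 1)))\<^sup>2 \<le> b\<^sup>2"
        by (rule power_mono) (use X in simp)
      then have "a * (real m + 3) / (real m + 1) \<le> b\<^sup>2" using X by simp
      then have "a / (real m + 1) \<le> b\<^sup>2 / (real m + 3)"
        by (simp add: field_simps)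
      then have "- (b ^ (m + 3)) / (real m + 3) + a / (real m + 1) * b ^ (m + 1) \<le> 0"
      proof -
        assume h: "a / (real m + 1) \<le> b\<^sup>2 / (real m + 3)"
        have "a / (real m + 1) * b ^ (m + 1) \<le> b\<^sup>2 / (real m + 3) * b ^ (m + 1)"
          using h b' by (intro mult_right_mono) auto
        also have "\<dots> = b ^ (m + 3) / (real m + 3)"
          by (simp add: power_add power2_eq_square power3_eq_cube field_simps)
        finally show ?thesis by simp
      qed
      then show ?thesis unfolding Phi_def E_def
        by (simp add: mult_nonneg_nonpos)
    qed
    have "(\<integral>\<^sup>+r. ennreal (indicator {0..b} r * f r) \<partial>lborel) = ennreal (c * integral {0..b} p + Phi b)"
      using fnn iF by (intro nn_integral_has_integral_lebesgue) auto
    also have "\<dots> \<le> ennreal (c * integral {0..b} p)"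
      using Phib by (intro ennreal_leI) simp
    also have "\<dots> = ennreal c * ennreal (integral {0..b} p)"
      using c Ipos by (simp add: ennreal_mult)
    also have "ennreal (integral {0..b} p) = (\<integral>\<^sup>+r. ennreal (indicator {0..b} r * p r) \<partial>lborel)"
      using pnn ip by (intro nn_integral_has_integral_lebesgue[symmetric]) auto
    also have "\<dots> \<le> J"
      unfolding J_def
      by (intro nn_integral_mono) (auto simp: p0 split: split_indicator)
    finally show ?thesis by (simp add: mult_left_mono)
  qed
  have meas_f[measurable]: "f \<in> borel_measurable borel"
    unfolding f_def E_def by measurable
  have sup: "(\<integral>\<^sup>+r. ennreal (f r) * indicator {0..} r \<partial>lborel)
      = (SUP k. \<integral>\<^sup>+r. ennreal (indicator {0..b0 + real k} r * f r) \<partial>lborel)"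
  proof -
    have "(\<integral>\<^sup>+r. (SUP k. ennreal (indicator {0..b0 + real k} r * f r)) \<partial>lborel)
        = (SUP k. \<integral>\<^sup>+r. ennreal (indicator {0..b0 + real k} r * f r) \<partial>lborel)"
    proof (rule nn_integral_monotone_convergence_SUP)
      show "incseq (\<lambda>k r. ennreal (indicator {0..b0 + real k} r * f r))"
        by (intro incseq_SucI le_funI ennreal_leI) (auto simp: fnn split: split_indicator)
    qed measurable
    moreover have "(SUP k. ennreal (indicator {0..b0 + real k} r * f r)) = ennreal (f r) * indicator {0..} r" for r
    proof (cases "0 \<le> r")
      case True
      obtain k :: nat where k: "r \<le> b0 + real k"
        using b0 real_arch_simple[of r] by (metis add_increasing)
      show ?thesis
      proof (rule antisym)
        show "(SUP k. ennreal (indicator {0..b0 + real k} r * f r)) \<le> ennreal (f r) * indicator {0..} r"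
          using True by (intro SUP_least) (auto split: split_indicator)
        show "ennreal (f r) * indicator {0..} r \<le> (SUP k. ennreal (indicator {0..b0 + real k} r * f r))"
          using True k by (intro SUP_upper2[of k]) (auto split: split_indicator)
      qed
    next
      case False then show ?thesis by (simp split: split_indicator)
    qed
    ultimately show ?thesis by simp
  qed
  have F: "(\<integral>\<^sup>+r. ennreal (f r) * indicator {0..} r \<partial>lborel) \<le> ennreal c * J"
    unfolding sup by (intro SUP_least fin) (use b0 in simp)
  have "(\<integral>\<^sup>+r. ennreal (r ^ (m + 2) * exp (- r\<^sup>2 / (4 * t))) * indicator {0<..} r * ennreal ((ln (r / sqrt a))\<^sup>2) \<partial>lborel)
      \<le> (\<integral>\<^sup>+r. ennreal (1/4) * (ennreal (f r) * indicator {0..} r) \<partial>lborel)"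
  proof (intro nn_integral_mono)
    fix r :: real
    show "ennreal (r ^ (m + 2) * exp (- r\<^sup>2 / (4 * t))) * indicator {0<..} r * ennreal ((ln (r / sqrt a))\<^sup>2)
        \<le> ennreal (1/4) * (ennreal (f r) * indicator {0..} r)"
    proof (cases "0 < r")
      case True
      have sa: "sqrt a > 0" using a by simp
      have "(ln (r / sqrt a))\<^sup>2 \<le> (r / sqrt a - 1 / (r / sqrt a))\<^sup>2 / 4"
        using True sa by (intro ln_sq_bound) simp
      moreover have "(r / sqrt a - 1 / (r / sqrt a))\<^sup>2 = r\<^sup>2 / a - 2 + a / r\<^sup>2"
        using True a by (simp add: power2_eq_square field_simps)
      ultimately have l: "(ln (r / sqrt a))\<^sup>2 \<le> (r\<^sup>2 / a - 2 + a / r\<^sup>2) / 4" by simp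
      have pf: "p r * (r\<^sup>2 / a - 2 + a / r\<^sup>2) = f r"
        using True a by (simp add: p_def f_def power_add power2_eq_square power4_eq_xxxx field_simps)
      have "p r * (ln (r / sqrt a))\<^sup>2 \<le> p r * ((r\<^sup>2 / a - 2 + a / r\<^sup>2) / 4)"
        using l pnn[of r] True by (intro mult_left_mono) auto
      also have "\<dots> = 1/4 * f r" using pf by simp
      finally have "p r * (ln (r / sqrt a))\<^sup>2 \<le> 1/4 * f r" .
      moreover have "ennreal (r ^ (m + 2) * exp (- r\<^sup>2 / (4 * t))) * indicator {0<..} r * ennreal ((ln (r / sqrt a))\<^sup>2)
          = ennreal (p r * (ln (r / sqrt a))\<^sup>2)"
        using True by (simp add: p_def E_def ennreal_mult)
      moreover have "ennreal (1/4) * (ennreal (f r) * indicator {0..} r) = ennreal (1/4 * f r)"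
        using True fnn[of r] ennreal_mult[of "1/4" "f r"] by simp
      ultimately show ?thesis by (simp add: ennreal_leI)
    next
      case False then show ?thesis by simp
    qed
  qed
  also have "\<dots> = ennreal (1/4) * (\<integral>\<^sup>+r. ennreal (f r) * indicator {0..} r \<partial>lborel)"
    by (intro nn_integral_cmult) measurable
  also have "\<dots> \<le> ennreal (1/4) * (ennreal c * J)"
    using F by (intro mult_left_mono) auto
  also have "\<dots> = ennreal (1 / (2 * (real m + 1))) * J"
  proof -
    have "ennreal (1/4) * ennreal c = ennreal (1/4 * c)" using c ennreal_mult[of "1/4" c] by simp
    also have "1/4 * c = 1 / (2 * (real m + 1))" by (simp add: c_def)
    finally show ?thesis by (simp add: mult.assoc[symmetric])
  qed
  finally show ?thesis by (simp add: J_def p_def E_def)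
qed

lemma emeasure_RN: "S \<in> sets (MM n) \<Longrightarrow> emeasure (RN n) S = emeasure (MM n) S"
  unfolding RN_def by (simp add: emeasure_completion main_part_sets)

lemma measure_RN: "S \<in> sets (MM n) \<Longrightarrow> measure (RN n) S = measure (MM n) S"
  unfolding RN_def by (simp add: measure_completion)

lemma mixture:
  assumes t: "t > 0" and G: "G \<in> borel_measurable (RN n)"
  shows "(\<integral>\<^sup>+x. ennreal (heat_kernel n t (\<lambda>i. y i - x i)) * G x \<partial>RN n)
       = (\<integral>\<^sup>+r. ennreal (wt n t r) * indicator {0<..} r * (\<integral>\<^sup>+x. indicator (eball n y r) x * G x \<partial>RN n) \<partial>lborel)"
proof -
  obtain G' where G': "G' \<in> borel_measurable (MM n)" "AE x in MM n. G x = G' x"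
    using completion_ex_borel_measurable[OF G[unfolded RN_def]] by auto
  have 1: "(\<integral>\<^sup>+x. ennreal (heat_kernel n t (\<lambda>i. y i - x i)) * G x \<partial>RN n)
      = (\<integral>\<^sup>+x. ennreal (heat_kernel n t (\<lambda>i. y i - x i)) * G' x \<partial>MM n)"
    unfolding RN_def nn_integral_completion by (intro nn_integral_cong_AE) (use G'(2) in auto)
  have 2: "(\<integral>\<^sup>+x. indicator (eball n y r) x * G x \<partial>RN n) = (\<integral>\<^sup>+x. indicator (eball n y r) x * G' x \<partial>MM n)" for r
    unfolding RN_def nn_integral_completion by (intro nn_integral_cong_AE) (use G'(2) in auto)
  show ?thesis unfolding 1 2 by (rule mixture_MM[OF t G'(1)])
qed

definition om :: "nat \<Rightarrow> real" where "om n = measure (MM n) (eball n (\<lambda>_. 0) 1)"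

lemma om_pos: "n \<ge> 1 \<Longrightarrow> 0 < om n"
  unfolding om_def measure_def
  by (rule enn2real_positive_iff[THEN iffD2]) (use unit_ball_pos[of n] unit_ball_fin[of n] in \<open>auto simp: top_unique\<close>)

lemma om_nonneg: "0 \<le> om n" by (simp add: om_def)

lemma emeasure_ball: "r > 0 \<Longrightarrow> emeasure (RN n) (eball n y r) = ennreal (om n * r ^ n)"
proof -
  assume r: "r > 0"
  have u: "emeasure (MM n) (eball n (\<lambda>_. 0) 1) = ennreal (om n)"
    unfolding om_def using unit_ball_fin[of n] by (intro emeasure_eq_ennreal_measure) simp
  have "emeasure (RN n) (eball n y r) = ennreal (r ^ n) * ennreal (om n)"
    by (simp only: emeasure_RN[OF eball_sets] scale_measure[OF r] u)
  also have "\<dots> = ennreal (om n * r ^ n)"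
    using ennreal_mult[of "r ^ n" "om n"] om_nonneg[of n] r by (simp add: mult.commute)
  finally show ?thesis .
qed

lemma measure_ball: "r > 0 \<Longrightarrow> n \<ge> 1 \<Longrightarrow> measure (RN n) (eball n y r) = om n * r ^ n"
  using emeasure_ball[of r n y] om_pos[of n] by (simp add: measure_def)

lemma sq_dev:
  fixes f :: "'a \<Rightarrow> real"
  assumes S: "S \<in> sets M" "emeasure M S < \<infinity>"
    and i1: "integrable M (\<lambda>x. indicator S x * f x)" and i2: "integrable M (\<lambda>x. indicator S x * (f x)\<^sup>2)"
  shows "integrable M (\<lambda>x. indicator S x * (f x - c)\<^sup>2)"
    "(\<integral>x. indicator S x * (f x - c)\<^sup>2 \<partial>M) = (\<integral>x. indicator S x * (f x)\<^sup>2 \<partial>M) - 2 * c * (\<integral>x. indicator S x * f x \<partial>M) + c\<^sup>2 * measure M S"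
proof -
  have iS: "integrable M (indicator S :: 'a \<Rightarrow> real)"
    using S by (simp add: integrable_indicator_iff sets.Int_space_eq2)
  have eq: "indicator S x * (f x - c)\<^sup>2 = indicator S x * (f x)\<^sup>2 - 2 * c * (indicator S x * f x) + c\<^sup>2 * indicator S x" for x
    by (simp add: power2_eq_square algebra_simps)
  have a1: "integrable M (\<lambda>x. 2 * c * (indicator S x * f x))"
    using i1 by (rule integrable_mult_right)
  have a2: "integrable M (\<lambda>x. indicator S x * (f x)\<^sup>2 - 2 * c * (indicator S x * f x))"
    using i2 a1 by (rule Bochner_Integration.integrable_diff)
  have a3: "integrable M (\<lambda>x. c\<^sup>2 * indicator S x)"
    using iS by (rule integrable_mult_right)
  show "integrable M (\<lambda>x. indicator S x * (f x - c)\<^sup>2)"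
    unfolding eq using a2 a3 by (rule Bochner_Integration.integrable_add)
  show "(\<integral>x. indicator S x * (f x - c)\<^sup>2 \<partial>M) = (\<integral>x. indicator S x * (f x)\<^sup>2 \<partial>M) - 2 * c * (\<integral>x. indicator S x * f x \<partial>M) + c\<^sup>2 * measure M S"
  proof -
    have "(\<integral>x. indicator S x * (f x - c)\<^sup>2 \<partial>M) = (\<integral>x. indicator S x * (f x)\<^sup>2 - 2 * c * (indicator S x * f x) + c\<^sup>2 * indicator S x \<partial>M)"
      unfolding eq ..
    also have "\<dots> = (\<integral>x. indicator S x * (f x)\<^sup>2 \<partial>M) - (\<integral>x. 2 * c * (indicator S x * f x) \<partial>M) + (\<integral>x. c\<^sup>2 * indicator S x \<partial>M)"
      using Bochner_Integration.integral_add[OF a2 a3] Bochner_Integration.integral_diff[OF i2 a1] by simp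
    also have "\<dots> = (\<integral>x. indicator S x * (f x)\<^sup>2 \<partial>M) - 2 * c * (\<integral>x. indicator S x * f x \<partial>M) + c\<^sup>2 * measure M S"
    proof -
      have "(\<integral>x. c\<^sup>2 * indicator S x \<partial>M) = c\<^sup>2 * measure M S"
        using S by (simp only: integral_mult_right_zero Bochner_Integration.integral_indicator sets.Int_space_eq2)
      moreover have "(\<integral>x. 2 * c * (indicator S x * f x) \<partial>M) = 2 * c * (\<integral>x. indicator S x * f x \<partial>M)"
        by (rule integral_mult_right_zero)
      ultimately show ?thesis by simp
    qed
    finally show ?thesis .
  qed
qed

lemma avg_eq: "avg n S f = (\<integral>x. indicator S x * f x \<partial>RN n) / measure (RN n) S"
  by (simp add: avg_def set_lebesgue_integral_def)

lemma abs_le_sq: fixes z :: real shows "\<bar>z\<bar> \<le> 1 + z\<^sup>2"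
proof (cases "\<bar>z\<bar> \<le> 1")
  case True then show ?thesis by (simp add: add_increasing2)
next
  case False
  then have "\<bar>z\<bar> * 1 \<le> \<bar>z\<bar> * \<bar>z\<bar>" by (intro mult_left_mono) auto
  then show ?thesis by (simp add: power2_eq_square)
qed
lemma g2b: fixes h g z :: real assumes "0 \<le> h" shows "norm (h * z) \<le> norm (h + h * z\<^sup>2)"
proof -
  have "h * \<bar>z\<bar> \<le> h * (1 + z\<^sup>2)" using assms abs_le_sq[of z] by (intro mult_left_mono) auto
  then show ?thesis using assms by (simp add: abs_mult distrib_left)
qed
lemma vE: fixes v E B :: real assumes "v \<le> B" shows "v - E\<^sup>2 \<le> B"
  using assms by (smt (verit) zero_le_power2)

lemma wt_rn_gen:
  fixes A r t :: real
  shows "A * (r / (2 * t) * B) * r ^ n = (A / (2 * t)) * ((r * r ^ n) * B)"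
  by (simp add: field_simps)

context
  fixes n :: nat and \<phi> :: "(nat \<Rightarrow> real) \<Rightarrow> real" and y :: "nat \<Rightarrow> real"
  assumes n1: "n \<ge> 1" and phi: "\<phi> \<in> BMO n" and y: "y \<in> space (RN n)"
begin

definition Av :: "real \<Rightarrow> real" where "Av r = avg n (eball n y r) \<phi>"
definition Vr :: "real \<Rightarrow> real" where "Vr r = avg n (eball n y r) (\<lambda>x. (\<phi> x)\<^sup>2) - (Av r)\<^sup>2"
definition bb :: real where "bb = real_of_ereal (bmo_norm n \<phi>)"

lemma phi_meas: "\<phi> \<in> borel_measurable (RN n)"
  using phi by (simp add: BMO_def locally_integrable_def)

lemma ball_isball: "r > 0 \<Longrightarrow> is_ball n (eball n y r)"
  using y by (auto simp: is_ball_def)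

lemma int1: "r > 0 \<Longrightarrow> integrable (RN n) (\<lambda>x. indicator (eball n y r) x * \<phi> x)"
  using phi ball_isball[of r] by (simp add: BMO_def locally_integrable_def set_integrable_def)

lemma int2: "r > 0 \<Longrightarrow> integrable (RN n) (\<lambda>x. indicator (eball n y r) x * (\<phi> x)\<^sup>2)"
  using phi ball_isball[of r] by (simp add: BMO_def locally_integrable_def set_integrable_def)

lemma B_sets: "eball n y r \<in> sets (RN n)"
  by (rule sets_RN[OF eball_sets])

lemma B_fin: "r > 0 \<Longrightarrow> emeasure (RN n) (eball n y r) < \<infinity>"
  using emeasure_ball[of r n y] by simp

lemma V_eq: "r > 0 \<Longrightarrow> measure (RN n) (eball n y r) = om n * r ^ n"
  using measure_ball[of r n y] n1 by simp

lemma V_pos: "r > 0 \<Longrightarrow> 0 < om n * r ^ n"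
  using om_pos[OF n1] by simp

lemma dev:
  assumes r: "r > 0"
  shows "integrable (RN n) (\<lambda>x. indicator (eball n y r) x * (\<phi> x - c)\<^sup>2)"
    "(\<integral>x. indicator (eball n y r) x * (\<phi> x - c)\<^sup>2 \<partial>RN n) = om n * r ^ n * (Vr r + (Av r - c)\<^sup>2)"
proof -
  note sd = sq_dev[OF B_sets B_fin[OF r] int1[OF r] int2[OF r], of c]
  show "integrable (RN n) (\<lambda>x. indicator (eball n y r) x * (\<phi> x - c)\<^sup>2)" by (rule sd(1))
  define V where "V = om n * r ^ n"
  have V: "V > 0" using V_pos[OF r] by (simp add: V_def)
  define I1 where "I1 = (\<integral>x. indicator (eball n y r) x * \<phi> x \<partial>RN n)"
  define I2 where "I2 = (\<integral>x. indicator (eball n y r) x * (\<phi> x)\<^sup>2 \<partial>RN n)"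
  have A1: "Av r = I1 / V" by (simp add: Av_def avg_eq I1_def V_eq[OF r] V_def)
  have A2: "avg n (eball n y r) (\<lambda>x. (\<phi> x)\<^sup>2) = I2 / V" by (simp add: avg_eq I2_def V_eq[OF r] V_def)
  have "(\<integral>x. indicator (eball n y r) x * (\<phi> x - c)\<^sup>2 \<partial>RN n) = I2 - 2 * c * I1 + c\<^sup>2 * V"
    using sd(2) by (simp add: I1_def I2_def V_eq[OF r] V_def)
  also have "\<dots> = V * (Vr r + (Av r - c)\<^sup>2)"
    unfolding Vr_def A1 A2 using V by (simp add: field_simps power2_eq_square)
  finally show "(\<integral>x. indicator (eball n y r) x * (\<phi> x - c)\<^sup>2 \<partial>RN n) = om n * r ^ n * (Vr r + (Av r - c)\<^sup>2)"
    by (simp add: V_def)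
qed

lemma Vr_nonneg: "r > 0 \<Longrightarrow> 0 \<le> Vr r"
proof -
  assume r: "r > 0"
  have "0 \<le> (\<integral>x. indicator (eball n y r) x * (\<phi> x - Av r)\<^sup>2 \<partial>RN n)"
    by (intro integral_nonneg_AE) (auto split: split_indicator)
  then have "0 \<le> om n * r ^ n * Vr r" using dev(2)[OF r, of "Av r"] by simp
  then show ?thesis using V_pos[OF r] by (simp add: zero_le_mult_iff)
qed

lemma sqrt_Vr_le: "r > 0 \<Longrightarrow> ereal (sqrt (Vr r)) \<le> bmo_norm n \<phi>"
  unfolding bmo_norm_def Vr_def Av_def
  by (rule SUP_upper) (simp add: ball_isball)

lemma bmo_eq: "bmo_norm n \<phi> = ereal bb" and bb_nonneg: "0 \<le> bb"
proof -
  have "ereal 0 \<le> bmo_norm n \<phi>"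
    using sqrt_Vr_le[of 1] Vr_nonneg[of 1] by (meson order_trans ereal_less_eq(3) real_sqrt_ge_zero zero_less_one)
  moreover have "bmo_norm n \<phi> < \<infinity>" using phi by (simp add: BMO_def)
  ultimately show "bmo_norm n \<phi> = ereal bb" "0 \<le> bb" unfolding bb_def
    by (cases "bmo_norm n \<phi>"; simp)+
qed

lemma Vr_le: "r > 0 \<Longrightarrow> Vr r \<le> bb\<^sup>2"
proof -
  assume r: "r > 0"
  have "sqrt (Vr r) \<le> bb" using sqrt_Vr_le[OF r] by (simp add: bmo_eq)
  then have "(sqrt (Vr r))\<^sup>2 \<le> bb\<^sup>2" using Vr_nonneg[OF r] by (intro power_mono) auto
  then show ?thesis using Vr_nonneg[OF r] by simp
qed


lemma step:
  assumes r: "0 < r" and rR: "r \<le> R"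
  shows "(Av r - Av R)\<^sup>2 \<le> (R / r) ^ n * bb\<^sup>2"
proof -
  have R: "0 < R" using r rR by simp
  have "om n * r ^ n * (Av r - Av R)\<^sup>2 \<le> om n * r ^ n * (Vr r + (Av r - Av R)\<^sup>2)"
    using Vr_nonneg[OF r] V_pos[OF r] by (intro mult_left_mono) auto
  also have "\<dots> = (\<integral>x. indicator (eball n y r) x * (\<phi> x - Av R)\<^sup>2 \<partial>RN n)"
    by (rule dev(2)[OF r, symmetric])
  also have "\<dots> \<le> (\<integral>x. indicator (eball n y R) x * (\<phi> x - Av R)\<^sup>2 \<partial>RN n)"
  proof (rule integral_mono[OF dev(1)[OF r] dev(1)[OF R]])
    fix x
    show "indicator (eball n y r) x * (\<phi> x - Av R)\<^sup>2 \<le> indicator (eball n y R) x * (\<phi> x - Av R)\<^sup>2"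
      using eball_mono[OF rR, of n y] by (auto split: split_indicator)
  qed
  also have "\<dots> = om n * R ^ n * Vr R"
    using dev(2)[OF R, of "Av R"] by simp
  also have "\<dots> \<le> om n * R ^ n * bb\<^sup>2"
    using Vr_le[OF R] V_pos[OF R] by (intro mult_left_mono) auto
  finally have *: "om n * r ^ n * (Av r - Av R)\<^sup>2 \<le> om n * R ^ n * bb\<^sup>2" .
  have eq: "(R / r) ^ n * bb\<^sup>2 = om n * R ^ n * bb\<^sup>2 / (om n * r ^ n)"
    using om_pos[OF n1] r by (simp add: power_divide field_simps)
  have le: "(Av r - Av R)\<^sup>2 \<le> om n * R ^ n * bb\<^sup>2 / (om n * r ^ n)"
    by (subst pos_le_divide_eq[OF V_pos[OF r]]) (metis * mult.commute)
  show ?thesis by (subst eq) (rule le)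
qed

lemma q_pow: "(1 + 1 / real n) ^ n \<le> 4"
proof -
  have "(1 + 1 / real n) ^ n \<le> exp (1 / real n) ^ n"
    by (intro power_mono) (auto simp: exp_ge_add_one_self add_nonneg_nonneg)
  also have "\<dots> = exp (real n * (1 / real n))" by (rule exp_of_nat_mult[symmetric])
  also have "\<dots> = exp 1" using n1 by simp
  also have "\<dots> \<le> 4" using e_less_272 by simp
  finally show ?thesis .
qed

lemma step2:
  assumes r: "0 < r" and rR: "r \<le> R" and Rq: "R \<le> (1 + 1 / real n) * r"
  shows "\<bar>Av r - Av R\<bar> \<le> 2 * bb"
proof -
  have "R / r \<le> 1 + 1 / real n" using Rq r by (simp add: divide_le_eq mult.commute)
  then have "(R / r) ^ n \<le> (1 + 1 / real n) ^ n"
    using r rR by (intro power_mono) auto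
  then have "(R / r) ^ n \<le> 4" using q_pow by simp
  then have "(Av r - Av R)\<^sup>2 \<le> 4 * bb\<^sup>2"
    using step[OF r rR] by (meson mult_right_mono order_trans zero_le_power2)
  also have "\<dots> = (2 * bb)\<^sup>2" by (simp add: power2_eq_square)
  finally show ?thesis using abs_le_square_iff[of "Av r - Av R" "2 * bb"] bb_nonneg by simp
qed

lemma chain_k:
  assumes r1: "0 < r1"
  shows "r1 \<le> r2 \<Longrightarrow> r2 \<le> (1 + 1 / real n) ^ k * r1 \<Longrightarrow> \<bar>Av r1 - Av r2\<bar> \<le> 2 * real k * bb"
proof (induction k arbitrary: r2)
  case 0
  then show ?case by simp
next
  case (Suc k)
  define q where "q = 1 + 1 / real n"
  have q1: "1 \<le> q" by (simp add: q_def)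
  show ?case
  proof (cases "r2 \<le> q ^ k * r1")
    case True
    then have "\<bar>Av r1 - Av r2\<bar> \<le> 2 * real k * bb" using Suc.IH[OF Suc.prems(1)] by (simp add: q_def)
    moreover have "2 * real k * bb \<le> 2 * real (Suc k) * bb" using bb_nonneg by (intro mult_right_mono) auto
    ultimately show ?thesis by linarith
  next
    case False
    define r' where "r' = q ^ k * r1"
    have r1r': "r1 \<le> r'" using q1 r1 by (simp add: r'_def one_le_power)
    have "\<bar>Av r1 - Av r'\<bar> \<le> 2 * real k * bb"
      using Suc.IH[OF r1r'] by (simp add: r'_def q_def)
    moreover have "\<bar>Av r' - Av r2\<bar> \<le> 2 * bb"
    proof (rule step2)
      show "0 < r'" using r1 r1r' by simp
      show "r' \<le> r2" using False by (simp add: r'_def)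
      show "r2 \<le> (1 + 1 / real n) * r'" using Suc.prems(2) by (simp add: r'_def q_def mult.assoc)
    qed
    moreover have "\<bar>Av r1 - Av r2\<bar> \<le> \<bar>Av r1 - Av r'\<bar> + \<bar>Av r' - Av r2\<bar>" by arith
    moreover have "2 * real (Suc k) * bb = 2 * real k * bb + 2 * bb" by (simp add: algebra_simps)
    ultimately show ?thesis by linarith
  qed
qed

lemma q_exp: "exp (1 / (real n + 1)) \<le> 1 + 1 / real n"
proof -
  have "1 + (- (1 / (real n + 1))) \<le> exp (- (1 / (real n + 1)))" by (rule exp_ge_add_one_self)
  then have h: "real n / (real n + 1) \<le> exp (- (1 / (real n + 1)))"
    by (simp add: field_simps)
  have pos: "0 < real n / (real n + 1)" using n1 by simp
  have "exp (1 / (real n + 1)) = 1 / exp (- (1 / (real n + 1)))" by (simp add: exp_minus divide_inverse)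
  also have "\<dots> \<le> 1 / (real n / (real n + 1))"
  proof (rule divide_left_mono)
    show "real n / (real n + 1) \<le> exp (- (1 / (real n + 1)))" by (rule h)
    have "0 < real n" using n1 by simp
    then show "0 < exp (- (1 / (real n + 1))) * (real n / (real n + 1))" by simp
  qed simp
  also have "\<dots> = 1 + 1 / real n" using n1 by (simp add: field_simps)
  finally show ?thesis .
qed

lemma chain_log:
  assumes r1: "0 < r1" and r12: "r1 \<le> r2"
  shows "\<bar>Av r1 - Av r2\<bar> \<le> 2 * bb * (2 * real n * ln (r2 / r1) + 1)"
proof -
  define L where "L = ln (r2 / r1)"
  have L0: "0 \<le> L" using r1 r12 by (simp add: L_def)
  define k where "k = nat \<lceil>(real n + 1) * L\<rceil>"
  have k1: "(real n + 1) * L \<le> real k" by (simp add: k_def) linarith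
  have k2: "real k \<le> (real n + 1) * L + 1" using L0 by (simp add: k_def)
  have "r2 / r1 = exp L" using r1 r12 by (simp add: L_def)
  also have "\<dots> \<le> exp (real k / (real n + 1))"
    using k1 by (simp add: field_simps)
  also have "\<dots> = exp (1 / (real n + 1)) ^ k"
    by (simp add: exp_of_nat_mult[symmetric])
  also have "\<dots> \<le> (1 + 1 / real n) ^ k"
    by (intro power_mono q_exp) simp
  finally have "r2 \<le> (1 + 1 / real n) ^ k * r1" using r1 by (simp add: divide_le_eq)
  then have "\<bar>Av r1 - Av r2\<bar> \<le> 2 * real k * bb" by (rule chain_k[OF r1 r12])
  also have "\<dots> \<le> 2 * ((real n + 1) * L + 1) * bb"
    using k2 bb_nonneg by (intro mult_right_mono) auto
  also have "\<dots> \<le> 2 * bb * (2 * real n * L + 1)"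
  proof -
    have "(real n + 1) * L \<le> (2 * real n) * L" using n1 L0 by (intro mult_right_mono) auto
    then have A: "(real n + 1) * L * (2 * bb) \<le> (2 * real n * L) * (2 * bb)"
      by (rule mult_right_mono) (use bb_nonneg in simp)
    have e1: "2 * ((real n + 1) * L + 1) * bb = (real n + 1) * L * (2 * bb) + 2 * bb" by (simp add: algebra_simps)
    have e2: "2 * bb * (2 * real n * L + 1) = (2 * real n * L) * (2 * bb) + 2 * bb" by (simp add: algebra_simps)
    show ?thesis unfolding e1 e2 using A by (rule add_right_mono)
  qed
  finally show ?thesis by (simp add: L_def)
qed

lemma chain_abs:
  assumes r: "0 < r" and r0: "0 < r0"
  shows "\<bar>Av r - Av r0\<bar> \<le> 2 * bb * (2 * real n * \<bar>ln (r / r0)\<bar> + 1)"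
proof (cases "r \<le> r0")
  case True
  have "ln (r0 / r) = - ln (r / r0)" using r r0 by (simp add: ln_div)
  moreover have "0 \<le> ln (r0 / r)" using True r by simp
  ultimately have "ln (r0 / r) = \<bar>ln (r / r0)\<bar>" by simp
  then show ?thesis using chain_log[OF r True] by simp
next
  case False
  then have "r0 \<le> r" by simp
  moreover have "0 \<le> ln (r / r0)" using False r0 by simp
  ultimately show ?thesis using chain_log[OF r0, of r] by (simp add: abs_minus_commute)
qed

lemma dev_bound:
  assumes r: "0 < r" and r0: "0 < r0"
  shows "(\<integral>x. indicator (eball n y r) x * (\<phi> x - Av r0)\<^sup>2 \<partial>RN n)
      \<le> om n * r ^ n * (bb\<^sup>2 * (9 + 32 * (real n)\<^sup>2 * (ln (r / r0))\<^sup>2))"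
proof -
  define L where "L = \<bar>ln (r / r0)\<bar>"
  have c: "\<bar>Av r - Av r0\<bar> \<le> 2 * bb * (2 * real n * L + 1)" using chain_abs[OF r r0] by (simp add: L_def)
  have "(Av r - Av r0)\<^sup>2 \<le> (2 * bb * (2 * real n * L + 1))\<^sup>2"
    using c by (simp add: abs_le_square_iff[symmetric] abs_of_nonneg)
  also have "\<dots> = 4 * bb\<^sup>2 * (2 * real n * L + 1)\<^sup>2" by (simp add: power_mult_distrib)
  also have "\<dots> \<le> 4 * bb\<^sup>2 * (8 * (real n)\<^sup>2 * L\<^sup>2 + 2)"
  proof -
    have "(2 * real n * L + 1)\<^sup>2 \<le> 8 * (real n)\<^sup>2 * L\<^sup>2 + 2"
      using sum_squares_bound[of "2 * real n * L" 1] 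
      by (simp add: power2_eq_square algebra_simps)
    then show ?thesis by (intro mult_left_mono) auto
  qed
  finally have d: "(Av r - Av r0)\<^sup>2 \<le> bb\<^sup>2 * (32 * (real n)\<^sup>2 * L\<^sup>2 + 8)" by (simp add: algebra_simps)
  have "(\<integral>x. indicator (eball n y r) x * (\<phi> x - Av r0)\<^sup>2 \<partial>RN n) = om n * r ^ n * (Vr r + (Av r - Av r0)\<^sup>2)"
    by (rule dev(2)[OF r])
  also have "\<dots> \<le> om n * r ^ n * (bb\<^sup>2 + bb\<^sup>2 * (32 * (real n)\<^sup>2 * L\<^sup>2 + 8))"
    using Vr_le[OF r] d V_pos[OF r] by (intro mult_left_mono add_mono) auto
  also have "\<dots> = om n * r ^ n * (bb\<^sup>2 * (9 + 32 * (real n)\<^sup>2 * (ln (r / r0))\<^sup>2))"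
    by (simp add: L_def algebra_simps)
  finally show ?thesis .
qed


lemma wt_rn: "wt n t r * r ^ n = ((4 * pi * t) powr (- real n / 2) / (2 * t)) * (r ^ ((n - 1) + 2) * exp (- r\<^sup>2 / (4 * t)))"
proof -
  have e: "(n - 1) + 2 = Suc n" using n1 by simp
  show ?thesis unfolding wt_def e power_Suc by (rule wt_rn_gen)
qed

lemma main_est:
  assumes t: "t > 0"
  shows "(\<integral>\<^sup>+x. ennreal (heat_kernel n t (\<lambda>i. y i - x i)) * ennreal ((\<phi> x - Av (sqrt (2 * t * (real n + 2))))\<^sup>2) \<partial>RN n)
     \<le> ennreal (bb\<^sup>2 * (9 + 16 * real n))"
proof -
  define r0 where "r0 = sqrt (2 * t * (real n + 2))"
  define c where "c = Av r0"
  have r0: "0 < r0" using t by (simp add: r0_def)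
  define om' where "om' = om n"
  have om: "0 < om'" using om_pos[OF n1] by (simp add: om'_def)
  define L where "L r = (ln (r / r0))\<^sup>2" for r
  define Jm where "Jm = (\<integral>\<^sup>+r. ennreal (wt n t r * r ^ n) * indicator {0<..} r \<partial>lborel)"
  define JL where "JL = (\<integral>\<^sup>+r. ennreal (wt n t r * r ^ n) * indicator {0<..} r * ennreal (L r) \<partial>lborel)"
  have [measurable]: "\<phi> \<in> borel_measurable (RN n)" by (rule phi_meas)
  have [measurable]: "(\<lambda>x. heat_kernel n t (\<lambda>i. y i - x i)) \<in> borel_measurable (RN n)"
    by (rule meas_RN[OF hk_meas])
  have norm: "ennreal om' * Jm = 1"
  proof -
    have "1 = (\<integral>\<^sup>+x. ennreal (heat_kernel n t (\<lambda>i. y i - x i)) * 1 \<partial>RN n)"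
      using hk_total[OF t, of n y] unfolding RN_def nn_integral_completion by simp
    also have "\<dots> = (\<integral>\<^sup>+r. ennreal (wt n t r) * indicator {0<..} r * (\<integral>\<^sup>+x. indicator (eball n y r) x * 1 \<partial>RN n) \<partial>lborel)"
      by (rule mixture[OF t]) simp
    also have "\<dots> = (\<integral>\<^sup>+r. ennreal om' * (ennreal (wt n t r * r ^ n) * indicator {0<..} r) \<partial>lborel)"
    proof (intro nn_integral_cong)
      fix r :: real
      show "ennreal (wt n t r) * indicator {0<..} r * (\<integral>\<^sup>+x. indicator (eball n y r) x * 1 \<partial>RN n)
          = ennreal om' * (ennreal (wt n t r * r ^ n) * indicator {0<..} r)"
      proof (cases "0 < r")
        case True
        have "(\<integral>\<^sup>+x. indicator (eball n y r) x * 1 \<partial>RN n) = ennreal (om' * r ^ n)"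
          using emeasure_ball[OF True, of n y] B_sets[of r] by (simp add: om'_def)
        moreover have "ennreal (wt n t r) * ennreal (om' * r ^ n) = ennreal om' * ennreal (wt n t r * r ^ n)"
        proof -
          have w: "0 \<le> wt n t r" using wt_nonneg[OF t, of r n] True by simp
          have "ennreal (wt n t r) * ennreal (om' * r ^ n) = ennreal (wt n t r * (om' * r ^ n))"
            using w om True by (intro ennreal_mult[symmetric]) auto
          moreover have "ennreal om' * ennreal (wt n t r * r ^ n) = ennreal (om' * (wt n t r * r ^ n))"
            using w om True by (intro ennreal_mult[symmetric]) auto
          moreover have "wt n t r * (om' * r ^ n) = om' * (wt n t r * r ^ n)" by (simp add: mult_ac)
          ultimately show ?thesis by simp
        qed
        ultimately show ?thesis using True by simp
      qed simp
    qed
    also have "\<dots> = ennreal om' * Jm"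
      unfolding Jm_def by (rule nn_integral_cmult) measurable
    finally show ?thesis by simp
  qed
  have Jm_eq: "Jm = ennreal (1 / om')"
  proof -
    have "ennreal (1 / om') * ennreal om' = 1"
      using om ennreal_mult[of "1 / om'" om'] by simp
    then have "Jm = ennreal (1 / om') * (ennreal om' * Jm)" by (simp add: mult.assoc[symmetric])
    then show ?thesis using norm by simp
  qed
  have JL_le: "JL \<le> ennreal (1 / (2 * real n)) * Jm"
  proof -
    define K where "K = (4 * pi * t) powr (- real n / 2) / (2 * t)"
    have K: "0 \<le> K" using t by (simp add: K_def)
    define p where "p r = r ^ ((n - 1) + 2) * exp (- r\<^sup>2 / (4 * t))" for r
    have a: "sqrt (2 * t * (real (n - 1) + 3)) = r0" using n1 by (simp add: r0_def of_nat_diff)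
    have wp: "wt n t r * r ^ n = K * p r" for r by (simp add: wt_rn K_def p_def)
    have pnn: "0 < r \<Longrightarrow> 0 \<le> p r" for r by (simp add: p_def)
    have [measurable]: "p \<in> borel_measurable borel" unfolding p_def[abs_def] by measurable
    have [measurable]: "L \<in> borel_measurable borel" unfolding L_def[abs_def] by measurable
    have pt: "ennreal (wt n t r * r ^ n) * indicator {0<..} r = ennreal K * (ennreal (p r) * indicator {0<..} r)" for r
    proof (cases "0 < r")
      case True
      have "ennreal (wt n t r * r ^ n) = ennreal K * ennreal (p r)"
        unfolding wp using K pnn[OF True] by (rule ennreal_mult)
      then show ?thesis by (simp add: mult.assoc)
    qed simp
    have JL_eq: "JL = ennreal K * (\<integral>\<^sup>+r. ennreal (p r) * indicator {0<..} r * ennreal (L r) \<partial>lborel)"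
    proof -
      have "JL = (\<integral>\<^sup>+r. ennreal K * (ennreal (p r) * indicator {0<..} r * ennreal (L r)) \<partial>lborel)"
        unfolding JL_def by (intro nn_integral_cong) (simp only: pt mult.assoc)
      also have "\<dots> = ennreal K * (\<integral>\<^sup>+r. ennreal (p r) * indicator {0<..} r * ennreal (L r) \<partial>lborel)"
        by (rule nn_integral_cmult) measurable
      finally show ?thesis .
    qed
    have Jm_eq2: "Jm = ennreal K * (\<integral>\<^sup>+r. ennreal (p r) * indicator {0<..} r \<partial>lborel)"
    proof -
      have "Jm = (\<integral>\<^sup>+r. ennreal K * (ennreal (p r) * indicator {0<..} r) \<partial>lborel)"
        unfolding Jm_def by (intro nn_integral_cong) (simp only: pt)
      also have "\<dots> = ennreal K * (\<integral>\<^sup>+r. ennreal (p r) * indicator {0<..} r \<partial>lborel)"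
        by (rule nn_integral_cmult) measurable
      finally show ?thesis .
    qed
    have mom: "(\<integral>\<^sup>+r. ennreal (p r) * indicator {0<..} r * ennreal (L r) \<partial>lborel)
        \<le> ennreal (1 / (2 * (real (n - 1) + 1))) * (\<integral>\<^sup>+r. ennreal (p r) * indicator {0<..} r \<partial>lborel)"
      using moment_m[OF t, of "n - 1"] unfolding a by (simp add: p_def L_def)
    have "real (n - 1) + 1 = real n" using n1 by (simp add: of_nat_diff)
    then have mom': "(\<integral>\<^sup>+r. ennreal (p r) * indicator {0<..} r * ennreal (L r) \<partial>lborel)
        \<le> ennreal (1 / (2 * real n)) * (\<integral>\<^sup>+r. ennreal (p r) * indicator {0<..} r \<partial>lborel)"
      using mom by simp
    show ?thesis
      unfolding JL_eq Jm_eq2 using mult_left_mono[OF mom', of "ennreal K"]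
      by (simp add: mult_ac)
  qed
  have G[measurable]: "(\<lambda>x. ennreal ((\<phi> x - c)\<^sup>2)) \<in> borel_measurable (RN n)" by measurable
  have "(\<integral>\<^sup>+x. ennreal (heat_kernel n t (\<lambda>i. y i - x i)) * ennreal ((\<phi> x - c)\<^sup>2) \<partial>RN n)
      = (\<integral>\<^sup>+r. ennreal (wt n t r) * indicator {0<..} r * (\<integral>\<^sup>+x. indicator (eball n y r) x * ennreal ((\<phi> x - c)\<^sup>2) \<partial>RN n) \<partial>lborel)"
    by (rule mixture[OF t G])
  also have "\<dots> \<le> (\<integral>\<^sup>+r. ennreal (om' * bb\<^sup>2 * 9) * (ennreal (wt n t r * r ^ n) * indicator {0<..} r)
        + ennreal (om' * bb\<^sup>2 * (32 * (real n)\<^sup>2)) * (ennreal (wt n t r * r ^ n) * indicator {0<..} r * ennreal (L r)) \<partial>lborel)"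
  proof (intro nn_integral_mono)
    fix r :: real
    show "ennreal (wt n t r) * indicator {0<..} r * (\<integral>\<^sup>+x. indicator (eball n y r) x * ennreal ((\<phi> x - c)\<^sup>2) \<partial>RN n)
      \<le> ennreal (om' * bb\<^sup>2 * 9) * (ennreal (wt n t r * r ^ n) * indicator {0<..} r)
        + ennreal (om' * bb\<^sup>2 * (32 * (real n)\<^sup>2)) * (ennreal (wt n t r * r ^ n) * indicator {0<..} r * ennreal (L r))"
    proof (cases "0 < r")
      case True
      have w: "0 \<le> wt n t r" using wt_nonneg[OF t, of r n] True by simp
      have "(\<integral>\<^sup>+x. indicator (eball n y r) x * ennreal ((\<phi> x - c)\<^sup>2) \<partial>RN n)
          = (\<integral>\<^sup>+x. ennreal (indicator (eball n y r) x * (\<phi> x - c)\<^sup>2) \<partial>RN n)"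
        by (intro nn_integral_cong) (simp split: split_indicator)
      also have "\<dots> = ennreal (\<integral>x. indicator (eball n y r) x * (\<phi> x - c)\<^sup>2 \<partial>RN n)"
        by (rule nn_integral_eq_integral[OF dev(1)[OF True]]) simp
      also have "\<dots> \<le> ennreal (om' * r ^ n * (bb\<^sup>2 * (9 + 32 * (real n)\<^sup>2 * L r)))"
        using dev_bound[OF True r0] by (intro ennreal_leI) (simp add: c_def om'_def L_def)
      finally have inner: "(\<integral>\<^sup>+x. indicator (eball n y r) x * ennreal ((\<phi> x - c)\<^sup>2) \<partial>RN n)
          \<le> ennreal (om' * r ^ n * (bb\<^sup>2 * (9 + 32 * (real n)\<^sup>2 * L r)))" .
      have Lnn: "0 \<le> L r" by (simp add: L_def)
      have X1: "0 \<le> om' * bb\<^sup>2 * 9 * (wt n t r * r ^ n)" using om w True by simp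
      have X2: "0 \<le> om' * bb\<^sup>2 * (32 * (real n)\<^sup>2) * (wt n t r * r ^ n * L r)" using om w True Lnn by simp
      have "ennreal (wt n t r) * indicator {0<..} r * (\<integral>\<^sup>+x. indicator (eball n y r) x * ennreal ((\<phi> x - c)\<^sup>2) \<partial>RN n)
          \<le> ennreal (wt n t r) * ennreal (om' * r ^ n * (bb\<^sup>2 * (9 + 32 * (real n)\<^sup>2 * L r)))"
        using True inner by (simp add: mult_left_mono)
      also have "\<dots> = ennreal (wt n t r * (om' * r ^ n * (bb\<^sup>2 * (9 + 32 * (real n)\<^sup>2 * L r))))"
        using w om True Lnn by (intro ennreal_mult[symmetric] mult_nonneg_nonneg) auto
      also have "wt n t r * (om' * r ^ n * (bb\<^sup>2 * (9 + 32 * (real n)\<^sup>2 * L r)))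
          = om' * bb\<^sup>2 * 9 * (wt n t r * r ^ n) + om' * bb\<^sup>2 * (32 * (real n)\<^sup>2) * (wt n t r * r ^ n * L r)"
        by (simp add: algebra_simps)
      also have "ennreal (om' * bb\<^sup>2 * 9 * (wt n t r * r ^ n) + om' * bb\<^sup>2 * (32 * (real n)\<^sup>2) * (wt n t r * r ^ n * L r))
          = ennreal (om' * bb\<^sup>2 * 9) * ennreal (wt n t r * r ^ n)
            + ennreal (om' * bb\<^sup>2 * (32 * (real n)\<^sup>2)) * (ennreal (wt n t r * r ^ n) * ennreal (L r))"
      proof -
        have wr: "0 \<le> wt n t r * r ^ n" using w True by simp
        have c1: "0 \<le> om' * bb\<^sup>2 * 9" using om by simp
        have c2: "0 \<le> om' * bb\<^sup>2 * (32 * (real n)\<^sup>2)" using om by simp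
        have "ennreal (om' * bb\<^sup>2 * 9 * (wt n t r * r ^ n) + om' * bb\<^sup>2 * (32 * (real n)\<^sup>2) * (wt n t r * r ^ n * L r))
            = ennreal (om' * bb\<^sup>2 * 9 * (wt n t r * r ^ n)) + ennreal (om' * bb\<^sup>2 * (32 * (real n)\<^sup>2) * (wt n t r * r ^ n * L r))"
          by (rule ennreal_plus[OF X1 X2])
        also have "ennreal (om' * bb\<^sup>2 * 9 * (wt n t r * r ^ n)) = ennreal (om' * bb\<^sup>2 * 9) * ennreal (wt n t r * r ^ n)"
          by (rule ennreal_mult[OF c1 wr])
        also have "ennreal (om' * bb\<^sup>2 * (32 * (real n)\<^sup>2) * (wt n t r * r ^ n * L r))
            = ennreal (om' * bb\<^sup>2 * (32 * (real n)\<^sup>2)) * ennreal (wt n t r * r ^ n * L r)"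
          by (rule ennreal_mult[OF c2]) (use wr Lnn in simp)
        also have "ennreal (wt n t r * r ^ n * L r) = ennreal (wt n t r * r ^ n) * ennreal (L r)"
          by (rule ennreal_mult[OF wr Lnn])
        finally show ?thesis .
      qed
      finally show ?thesis using True by simp
    qed simp
  qed
  also have "\<dots> = ennreal (om' * bb\<^sup>2 * 9) * Jm + ennreal (om' * bb\<^sup>2 * (32 * (real n)\<^sup>2)) * JL"
    unfolding Jm_def JL_def
    by (subst nn_integral_add) (auto simp: nn_integral_cmult L_def)
  also have "\<dots> \<le> ennreal (om' * bb\<^sup>2 * 9) * ennreal (1 / om') + ennreal (om' * bb\<^sup>2 * (32 * (real n)\<^sup>2)) * (ennreal (1 / (2 * real n)) * ennreal (1 / om'))"
    using JL_le unfolding Jm_eq by (intro add_mono mult_left_mono) auto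
  also have "\<dots> = ennreal (bb\<^sup>2 * (9 + 16 * real n))"
  proof -
    have e1: "ennreal (om' * bb\<^sup>2 * 9) * ennreal (1 / om') = ennreal (9 * bb\<^sup>2)"
      using om by (subst ennreal_mult[symmetric]) (auto simp: field_simps)
    have e2: "ennreal (om' * bb\<^sup>2 * (32 * (real n)\<^sup>2)) * (ennreal (1 / (2 * real n)) * ennreal (1 / om'))
        = ennreal (16 * real n * bb\<^sup>2)"
    proof -
      have "ennreal (1 / (2 * real n)) * ennreal (1 / om') = ennreal (1 / (2 * real n) * (1 / om'))"
        using om by (subst ennreal_mult[symmetric]) auto
      moreover have "ennreal (om' * bb\<^sup>2 * (32 * (real n)\<^sup>2)) * ennreal (1 / (2 * real n) * (1 / om'))
          = ennreal (om' * bb\<^sup>2 * (32 * (real n)\<^sup>2) * (1 / (2 * real n) * (1 / om')))"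
        using om by (subst ennreal_mult[symmetric]) auto
      moreover have "om' * bb\<^sup>2 * (32 * (real n)\<^sup>2) * (1 / (2 * real n) * (1 / om')) = 16 * real n * bb\<^sup>2"
        using om n1 by (simp add: field_simps power2_eq_square)
      ultimately show ?thesis by simp
    qed
    show ?thesis unfolding e1 e2
      using bb_nonneg by (subst ennreal_plus[symmetric]) (auto simp: algebra_simps)
  qed
  finally show ?thesis by (simp add: c_def r0_def)
qed


lemma heat_var:
  assumes t: "t > 0"
  shows "heat_ext n (\<lambda>x. (\<phi> x)\<^sup>2) y t - (heat_ext n \<phi> y t)\<^sup>2 \<le> bb\<^sup>2 * (9 + 16 * real n)"
proof -
  define h where "h x = heat_kernel n t (\<lambda>i. y i - x i)" for x
  define c where "c = Av (sqrt (2 * t * (real n + 2)))"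
  define B0 where "B0 = bb\<^sup>2 * (9 + 16 * real n)"
  have B0: "0 \<le> B0" by (simp add: B0_def)
  have hm[measurable]: "h \<in> borel_measurable (RN n)"
    unfolding h_def[abs_def] by (rule meas_RN[OF hk_meas])
  have [measurable]: "\<phi> \<in> borel_measurable (RN n)" by (rule phi_meas)
  have hnn: "0 \<le> h x" for x using t by (simp add: h_def hk_nonneg)
  have hb: "has_bochner_integral (RN n) h 1"
  proof (rule has_bochner_integral_nn_integral)
    show "(\<integral>\<^sup>+x. ennreal (h x) \<partial>RN n) = ennreal 1"
      using hk_total[OF t, of n y] unfolding RN_def nn_integral_completion by (simp add: h_def)
  qed (auto simp: hnn)
  have hi: "integrable (RN n) h" and hI: "(\<integral>x. h x \<partial>RN n) = 1"
    using hb by (simp_all add: has_bochner_integral_iff)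
  define g1 where "g1 x = h x * (\<phi> x - c)\<^sup>2" for x
  have g1m[measurable]: "g1 \<in> borel_measurable (RN n)" unfolding g1_def[abs_def] by measurable
  have g1nn: "0 \<le> g1 x" for x by (simp add: g1_def hnn)
  have nn1: "(\<integral>\<^sup>+x. ennreal (g1 x) \<partial>RN n) \<le> ennreal B0"
  proof -
    have "(\<integral>\<^sup>+x. ennreal (g1 x) \<partial>RN n) = (\<integral>\<^sup>+x. ennreal (h x) * ennreal ((\<phi> x - c)\<^sup>2) \<partial>RN n)"
      by (intro nn_integral_cong) (simp add: g1_def ennreal_mult hnn)
    also have "\<dots> \<le> ennreal B0"
      using main_est[OF t] by (simp add: h_def c_def B0_def)
    finally show ?thesis .
  qed
  define v where "v = enn2real (\<integral>\<^sup>+x. ennreal (g1 x) \<partial>RN n)"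
  have fin: "(\<integral>\<^sup>+x. ennreal (g1 x) \<partial>RN n) < top"
    using nn1 by (simp add: le_less_trans)
  have vdef: "(\<integral>\<^sup>+x. ennreal (g1 x) \<partial>RN n) = ennreal v"
    using fin by (simp add: v_def)
  have v0: "0 \<le> v" by (simp add: v_def)
  have vB: "v \<le> B0" using nn1 B0 by (simp add: vdef)
  have g1b: "has_bochner_integral (RN n) g1 v"
    by (rule has_bochner_integral_nn_integral) (auto simp: g1nn v0 vdef)
  have g1i: "integrable (RN n) g1" and g1I: "(\<integral>x. g1 x \<partial>RN n) = v"
    using g1b by (simp_all add: has_bochner_integral_iff)
  define g2 where "g2 x = h x * (\<phi> x - c)" for x
  have g2m[measurable]: "g2 \<in> borel_measurable (RN n)" unfolding g2_def[abs_def] by measurable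
  have g2i: "integrable (RN n) g2"
  proof (rule Bochner_Integration.integrable_bound[OF Bochner_Integration.integrable_add[OF hi g1i] g2m])
    show "AE x in RN n. norm (g2 x) \<le> norm (h x + g1 x)"
    proof (intro AE_I2)
      fix x
      show "norm (g2 x) \<le> norm (h x + g1 x)"
        using g2b[OF hnn[of x], of "\<phi> x - c"] by (simp add: g2_def g1_def)
    qed
  qed
  define E1 where "E1 = (\<integral>x. g2 x \<partial>RN n)"
  have he1: "heat_ext n \<phi> y t = E1 + c"
  proof -
    have "heat_ext n \<phi> y t = (\<integral>x. g2 x + c * h x \<partial>RN n)"
      unfolding heat_ext_def by (intro Bochner_Integration.integral_cong) (auto simp: g2_def h_def algebra_simps)
    also have "\<dots> = E1 + c"
      using g2i hi hI by (simp add: E1_def)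
    finally show ?thesis .
  qed
  have he2: "heat_ext n (\<lambda>x. (\<phi> x)\<^sup>2) y t = v + 2 * c * E1 + c\<^sup>2"
  proof -
    have "heat_ext n (\<lambda>x. (\<phi> x)\<^sup>2) y t = (\<integral>x. g1 x + 2 * c * g2 x + c\<^sup>2 * h x \<partial>RN n)"
      unfolding heat_ext_def
      by (intro Bochner_Integration.integral_cong) (auto simp: g1_def g2_def h_def power2_eq_square algebra_simps)
    also have "\<dots> = v + 2 * c * E1 + c\<^sup>2"
      using g1i g2i hi hI g1I by (simp add: E1_def)
    finally show ?thesis .
  qed
  have "heat_ext n (\<lambda>x. (\<phi> x)\<^sup>2) y t - (heat_ext n \<phi> y t)\<^sup>2 = v - E1\<^sup>2"
    unfolding he1 he2 by (simp add: power2_eq_square algebra_simps)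
  also have "\<dots> \<le> B0" using vB by (rule vE)
  finally show ?thesis by (simp add: B0_def)
qed

lemma pt_bound:
  assumes t: "t > 0"
  shows "ereal (sqrt (heat_ext n (\<lambda>x. (\<phi> x)\<^sup>2) y t - (heat_ext n \<phi> y t)\<^sup>2)) \<le> ereal (5 * sqrt (real n)) * bmo_norm n \<phi>"
proof -
  have "sqrt (heat_ext n (\<lambda>x. (\<phi> x)\<^sup>2) y t - (heat_ext n \<phi> y t)\<^sup>2) \<le> sqrt (bb\<^sup>2 * (9 + 16 * real n))"
    using heat_var[OF t] by simp
  also have "\<dots> \<le> sqrt ((5 * sqrt (real n) * bb)\<^sup>2)"
  proof (rule real_sqrt_le_mono)
    have "bb\<^sup>2 * (9 + 16 * real n) \<le> bb\<^sup>2 * (25 * real n)"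
      using n1 by (intro mult_left_mono) auto
    also have "\<dots> = (5 * sqrt (real n) * bb)\<^sup>2" by (simp add: power_mult_distrib)
    finally show "bb\<^sup>2 * (9 + 16 * real n) \<le> (5 * sqrt (real n) * bb)\<^sup>2" .
  qed
  also have "\<dots> = 5 * sqrt (real n) * bb" using bb_nonneg by simp
  finally show ?thesis by (simp add: bmo_eq)
qed

end


theorem proposition4p1:
  shows "\<exists>C::real. \<forall>n::nat. \<forall>\<phi>. n \<ge> 1 \<longrightarrow> \<phi> \<in> BMO n \<longrightarrow>
           H_norm n \<phi> \<le> ereal (C * sqrt (real n)) * bmo_norm n \<phi>"
proof (intro exI[of _ 5] allI impI)
  fix n :: nat and \<phi> :: "(nat \<Rightarrow> real) \<Rightarrow> real"
  assume n: "n \<ge> 1" and phi: "\<phi> \<in> BMO n"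
  show "H_norm n \<phi> \<le> ereal (5 * sqrt (real n)) * bmo_norm n \<phi>"
    unfolding H_norm_def
  proof (rule SUP_least)
    fix z assume z: "z \<in> space (RN n) \<times> {0::real<..}"
    then show "ereal (sqrt (heat_ext n (\<lambda>x. (\<phi> x)\<^sup>2) (fst z) (snd z) - (heat_ext n \<phi> (fst z) (snd z))\<^sup>2))
        \<le> ereal (5 * sqrt (real n)) * bmo_norm n \<phi>"
      using pt_bound[OF n phi, of "fst z" "snd z"] by auto
  qed
qed

end
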